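(* Let $R$ be a $v$-domain. Then every nonzero finitely generated ideal of $R$ is $v$-basic.
   Context: For a domain $R$ with quotient field $K$: $I^{-1}=(R:I)=\{x\in K:xI\subseteq R\}$, $I_v=(I^{-1})^{-1}$. $R$ is a $v$-domain if every nonzero finitely generated ideal $I$ satisfies $(II^{-1})_v=R$. For a nonzero ideal $I$, an ideal $J\subseteq I$ is a $v$-reduction of $I$ if $(JI^n)_v=(I^{n+1})_v$ for some integer $n\ge0$; $I$ is $v$-basic if every $v$-reduction $J$ of $I$ satisfies $J_v=I_v$. *)

theory Defs
  imports "HOL-Computational_Algebra.Fraction_Field"
begin

text \<open>Setting: R is an integral domain (type class idom) and K = 'a fract is its
quotient field. Ideals of R are subsets of 'a; fractional subsets live in K.\<close>

definition emb :: "'a::idom \<Rightarrow> 'a fract" where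
  "emb r = Fract r 1"

definition Rset :: "'a::idom fract set" where
  "Rset = range emb"

definition is_ideal :: "'a::idom set \<Rightarrow> bool" where
  "is_ideal I \<longleftrightarrow> 0 \<in> I \<and> (\<forall>a\<in>I. \<forall>b\<in>I. a + b \<in> I) \<and> (\<forall>r a. a \<in> I \<longrightarrow> r * a \<in> I)"

definition fin_gen :: "'a::idom set \<Rightarrow> bool" where
  "fin_gen I \<longleftrightarrow> (\<exists>F. finite F \<and> I = {\<Sum>a\<in>F. c a * a | c. True})"

definition fprod :: "'a::idom fract set \<Rightarrow> 'a fract set \<Rightarrow> 'a fract set" where
  "fprod A B = {x. \<exists>(n::nat) f g. x = (\<Sum>i<n. f i * g i) \<and> (\<forall>i<n. f i \<in> A \<and> g i \<in> B)}"

fun fpow :: "'a::idom fract set \<Rightarrow> nat \<Rightarrow> 'a fract set" where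
  "fpow A 0 = Rset"
| "fpow A (Suc n) = fprod A (fpow A n)"

definition finv :: "'a::idom fract set \<Rightarrow> 'a fract set" where
  "finv A = {x. \<forall>a\<in>A. x * a \<in> Rset}"

definition vclos :: "'a::idom fract set \<Rightarrow> 'a fract set" where
  "vclos A = finv (finv A)"

definition frac :: "'a::idom set \<Rightarrow> 'a fract set" where
  "frac I = emb ` I"

definition v_domain :: "'a::idom itself \<Rightarrow> bool" where
  "v_domain _ \<longleftrightarrow> (\<forall>I :: 'a set. is_ideal I \<and> fin_gen I \<and> I \<noteq> {0} \<longrightarrow>
      vclos (fprod (frac I) (finv (frac I))) = Rset)"

definition v_reduction :: "'a::idom set \<Rightarrow> 'a set \<Rightarrow> bool" where
  "v_reduction J I \<longleftrightarrow> is_ideal J \<and> J \<subseteq> I \<and>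
     (\<exists>n. vclos (fprod (frac J) (fpow (frac I) n)) = vclos (fpow (frac I) (Suc n)))"

definition v_basic :: "'a::idom set \<Rightarrow> bool" where
  "v_basic I \<longleftrightarrow> (\<forall>J. v_reduction J I \<longrightarrow> vclos (frac J) = vclos (frac I))"

end

theory Submission
  imports Defs
begin

lemma R0: "0 \<in> Rset" unfolding Rset_def emb_def
  by (rule range_eqI[of _ _ 0]) (simp add: Zero_fract_def)
lemma R1: "1 \<in> Rset" unfolding Rset_def emb_def
  by (rule range_eqI[of _ _ 1]) (simp add: One_fract_def)
lemma Radd: "a \<in> Rset \<Longrightarrow> b \<in> Rset \<Longrightarrow> a + b \<in> Rset"
  unfolding Rset_def emb_def by auto
lemma Rmult: "a \<in> Rset \<Longrightarrow> b \<in> Rset \<Longrightarrow> a * b \<in> Rset"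
  unfolding Rset_def emb_def by auto
lemma Rsum: "(\<And>i. i \<in> S \<Longrightarrow> f i \<in> Rset) \<Longrightarrow> sum f S \<in> Rset"
  by (induction S rule: infinite_finite_induct) (auto simp: R0 Radd)

lemma L1: "x \<in> finv (fprod A B) \<longleftrightarrow> (\<forall>a\<in>A. \<forall>b\<in>B. x * (a * b) \<in> Rset)"
proof
  assume h: "x \<in> finv (fprod A B)"
  show "\<forall>a\<in>A. \<forall>b\<in>B. x * (a * b) \<in> Rset"
  proof (intro ballI)
    fix a b assume ab: "a \<in> A" "b \<in> B"
    have "a * b \<in> fprod A B" unfolding fprod_def
      by (rule CollectI, rule exI[of _ "1::nat"], rule exI[of _ "\<lambda>_. a"], rule exI[of _ "\<lambda>_. b"])
         (simp add: ab)
    thus "x * (a * b) \<in> Rset" using h unfolding finv_def by blast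
  qed
next
  assume h: "\<forall>a\<in>A. \<forall>b\<in>B. x * (a * b) \<in> Rset"
  show "x \<in> finv (fprod A B)" unfolding finv_def fprod_def
  proof (safe)
    fix n f g assume fg: "\<forall>i<n. f i \<in> A \<and> g i \<in> B"
    have "x * (\<Sum>i<n. f i * g i) = (\<Sum>i<n. x * (f i * g i))" by (rule sum_distrib_left)
    also have "\<dots> \<in> Rset" by (rule Rsum) (use fg h in blast)
    finally show "x * (\<Sum>i<n. f i * g i) \<in> Rset" .
  qed
qed

lemma sw: "\<forall>a\<in>A. \<forall>b\<in>B. x * (a * b) \<in> Rset \<Longrightarrow> \<forall>b\<in>B. \<forall>a\<in>A. x * (b * a) \<in> Rset"
proof (intro ballI)
  fix a b assume h: "\<forall>a\<in>A. \<forall>b\<in>B. x * (a * b) \<in> Rset" and "b \<in> B" "a \<in> A"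
  hence "x * (a * b) \<in> Rset" by blast
  moreover have "a * b = b * a" by (rule mult.commute)
  ultimately show "x * (b * a) \<in> Rset" by simp
qed

lemma fcomm: "finv (fprod A B) = finv (fprod B A)"
proof (rule set_eqI)
  fix x
  show "x \<in> finv (fprod A B) \<longleftrightarrow> x \<in> finv (fprod B A)"
    unfolding L1 using sw[of A B x] sw[of B A x] by blast
qed

lemma fright: "x \<in> finv (fprod C B) \<longleftrightarrow> (\<forall>b\<in>B. x * b \<in> finv C)"
proof -
  have e: "\<And>a b. x * b * a = x * (a * b)" by (simp add: mult_ac)
  show ?thesis unfolding L1 unfolding finv_def mem_Collect_eq e by blast
qed

lemma fleft: "x \<in> finv (fprod C B) \<longleftrightarrow> (\<forall>a\<in>C. x * a \<in> finv B)"
proof -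
  have e: "\<And>a b. x * a * b = x * (a * b)" by (simp add: mult_ac)
  show ?thesis unfolding L1 unfolding finv_def mem_Collect_eq e by blast
qed

lemma fcongl: "finv A = finv A' \<Longrightarrow> finv (fprod A B) = finv (fprod A' B)"
  unfolding set_eq_iff fright by simp

lemma fcongr: "finv B = finv B' \<Longrightarrow> finv (fprod A B) = finv (fprod A B')"
proof -
  assume "finv B = finv B'"
  hence "finv (fprod B A) = finv (fprod B' A)" by (rule fcongl)
  thus ?thesis using fcomm[of A B] fcomm[of A B'] by simp
qed

lemma fassoc: "finv (fprod (fprod A B) C) = finv (fprod A (fprod B C))"
proof -
  have h1: "x \<in> finv (fprod (fprod A B) C) \<longleftrightarrow> (\<forall>a\<in>A. \<forall>b\<in>B. \<forall>c\<in>C. x * (a * b * c) \<in> Rset)" for x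
  proof -
    have h1: "x \<in> finv (fprod (fprod A B) C) \<longleftrightarrow> (\<forall>c\<in>C. x * c \<in> finv (fprod A B))"
      by (rule fright)
    also have "\<dots> \<longleftrightarrow> (\<forall>a\<in>A. \<forall>b\<in>B. \<forall>c\<in>C. x * (a * b * c) \<in> Rset)"
      proof -
        have e: "\<And>a b c. x * c * (a * b) = x * (a * b * c)" by (simp add: mult_ac)
        show ?thesis unfolding L1 e by blast
      qed
    finally show ?thesis .
  qed
  have h2: "x \<in> finv (fprod A (fprod B C)) \<longleftrightarrow> (\<forall>a\<in>A. \<forall>b\<in>B. \<forall>c\<in>C. x * (a * b * c) \<in> Rset)" for x
  proof -
    have "x \<in> finv (fprod A (fprod B C)) \<longleftrightarrow> (\<forall>a\<in>A. x * a \<in> finv (fprod B C))"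
      by (rule fleft)
    also have "\<dots> \<longleftrightarrow> (\<forall>a\<in>A. \<forall>b\<in>B. \<forall>c\<in>C. x * (a * b * c) \<in> Rset)"
      proof -
        have e: "\<And>a b c. x * a * (b * c) = x * (a * b * c)" by (simp add: mult_ac)
        show ?thesis unfolding L1 e by blast
      qed
    finally show ?thesis .
  qed
  show ?thesis by (rule set_eqI, unfold h1 h2, rule refl)
qed

lemma finvR: "finv (fprod A Rset) = finv (A :: 'a::idom fract set)"
proof (rule set_eqI)
  fix x
  show "x \<in> finv (fprod A Rset) \<longleftrightarrow> x \<in> finv A"
    unfolding L1
  proof
    assume h: "\<forall>a\<in>A. \<forall>b\<in>Rset. x * (a * b) \<in> Rset"
    show "x \<in> finv A" unfolding finv_def
    proof (intro CollectI ballI)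
      fix a assume "a \<in> A"
      hence "x * (a * 1) \<in> Rset" using h R1 by blast
      thus "x * a \<in> Rset" by simp
    qed
  next
    assume h: "x \<in> finv A"
    show "\<forall>a\<in>A. \<forall>b\<in>Rset. x * (a * b) \<in> Rset"
    proof (intro ballI)
      fix a b :: "'a fract" assume "a \<in> A" "b \<in> Rset"
      hence "x * a * b \<in> Rset" using h Rmult unfolding finv_def by blast
      thus "x * (a * b) \<in> Rset" by (simp add: mult.assoc)
    qed
  qed
qed

lemma finv_anti: "A \<subseteq> B \<Longrightarrow> finv B \<subseteq> finv A"
  unfolding finv_def by blast

lemma sub_vclos: "A \<subseteq> vclos A"
proof
  fix a assume a: "a \<in> A"
  show "a \<in> vclos A" unfolding vclos_def
  proof (subst finv_def, intro CollectI ballI)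
    fix y assume "y \<in> finv A"
    hence "y * a \<in> Rset" using a unfolding finv_def by blast
    thus "a * y \<in> Rset" by (simp add: mult.commute)
  qed
qed

lemma finv3: "finv (vclos A) = finv A"
proof
  show "finv (vclos A) \<subseteq> finv A" by (rule finv_anti[OF sub_vclos])
  show "finv A \<subseteq> finv (vclos A)" using sub_vclos[of "finv A"] unfolding vclos_def .
qed

lemma finv_vclos_iff: "vclos A = vclos B \<Longrightarrow> finv A = finv B"
proof -
  assume "vclos A = vclos B"
  hence "finv (vclos A) = finv (vclos B)" by simp
  thus ?thesis unfolding finv3 .
qed

lemma finvRset: "finv Rset = Rset"
proof
  show "finv Rset \<subseteq> Rset" unfolding finv_def using R1 by force
  show "Rset \<subseteq> finv Rset" unfolding finv_def using Rmult by blast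
qed

lemma vclosR_finv: "vclos M = Rset \<Longrightarrow> finv (fprod A M) = finv A"
proof -
  assume "vclos M = Rset"
  hence "finv (vclos M) = finv Rset" by simp
  hence "finv M = finv Rset" unfolding finv3 .
  hence "finv (fprod A M) = finv (fprod A Rset)" by (rule fcongr)
  thus ?thesis unfolding finvR .
qed

lemma powinv:
  assumes "vclos (fprod A (finv A)) = Rset"
  shows "vclos (fprod (fpow A n) (fpow (finv A) n)) = Rset"
proof (induction n)
  case 0
  have "finv (fprod Rset Rset) = Rset" by (simp add: finvR finvRset)
  thus ?case unfolding vclos_def by (metis finvRset fpow.simps(1))
next
  case (Suc n)
  let ?P = "fpow A n" and ?Q = "fpow (finv A) n"
  have "finv (fprod (fprod A ?P) (fprod (finv A) ?Q))
      = finv (fprod A (fprod ?P (fprod (finv A) ?Q)))" by (rule fassoc)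
  also have "\<dots> = finv (fprod A (fprod (fprod ?P (finv A)) ?Q))"
    by (rule fcongr, rule fassoc[symmetric])
  also have "\<dots> = finv (fprod A (fprod (fprod (finv A) ?P) ?Q))"
    by (rule fcongr, rule fcongl, rule fcomm)
  also have "\<dots> = finv (fprod A (fprod (finv A) (fprod ?P ?Q)))"
    by (rule fcongr, rule fassoc)
  also have "\<dots> = finv (fprod (fprod A (finv A)) (fprod ?P ?Q))"
    by (rule fassoc[symmetric])
  also have "\<dots> = finv (fprod A (finv A))"
    by (rule vclosR_finv) (rule Suc.IH)
  also have "\<dots> = finv Rset" using assms by (metis finv3)
  finally have h: "finv (fprod (fprod A ?P) (fprod (finv A) ?Q)) = finv Rset" .
  have "vclos (fprod (fprod A ?P) (fprod (finv A) ?Q)) = Rset"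
    unfolding vclos_def h by (simp only: finvRset)
  thus ?case by (simp only: fpow.simps(2))
qed

theorem proposition1p6:
  assumes "v_domain TYPE('a::idom)"
    and "is_ideal (I :: 'a set)" and "fin_gen I" and "I \<noteq> {0}"
  shows "v_basic I"
  unfolding v_basic_def
proof (intro allI impI)
  fix J :: "'a set" assume "v_reduction J I"
  then obtain n where e: "vclos (fprod (frac J) (fpow (frac I) n)) = vclos (fpow (frac I) (Suc n))"
    unfolding v_reduction_def by blast
  let ?A = "frac I" and ?B = "frac J"
  let ?P = "fpow ?A n" and ?Q = "fpow (finv ?A) n"
  have inv: "vclos (fprod ?A (finv ?A)) = Rset"
    using assms unfolding v_domain_def by blast
  have PQ: "vclos (fprod ?P ?Q) = Rset" by (rule powinv[OF inv])
  have key: "finv X = finv (fprod (fprod X ?P) ?Q)" for X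
    using fassoc[of X ?P ?Q] vclosR_finv[OF PQ, of X] by simp
  have "finv (fprod ?B ?P) = finv (fprod ?A ?P)"
    using finv_vclos_iff[OF e] by simp
  hence h: "finv (fprod (fprod ?B ?P) ?Q) = finv (fprod (fprod ?A ?P) ?Q)"
    by (rule fcongl)
  have "finv ?B = finv ?A" using trans[OF key[of ?B] trans[OF h key[of ?A, symmetric]]] .
  thus "vclos ?B = vclos ?A" by (simp add: vclos_def)
qed

end
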